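(* Let $q\ge2$ and $n\ge3$ be integers, and let $\mathcal{A}\subseteq\mathcal{N}_{q,n}$ with $|\mathcal{A}|\ge3^{q-1}$. Then $$\min_{\mathbf{t},\mathbf{t}'\in\mathcal{A},\ \mathbf{t}\ne\mathbf{t}'}d_{\mathrm c}(\mathbf{t},\mathbf{t}')\le2(q-1)\frac{n}{|\mathcal{A}|^{1/(q-1)}}.$$
   Context: $\mathcal{N}_{q,n}=\{\mathbf{t}\in\mathbb{Z}_{\ge0}^q:\sum_{i=1}^qt_i=n\}$; $d_{\mathrm c}(\mathbf{t},\mathbf{t}')=\frac12\sum_{i=1}^q|t_i-t_i'|$. *)

theory Defs
  imports "HOL-Analysis.Analysis"
begin

text \<open>Compositions: vectors t = (t_1,...,t_q) of nonnegative integers, represented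
  as functions nat => nat indexed by 0..q-1 and equal to 0 outside this range.\<close>
definition comps :: "nat \<Rightarrow> nat \<Rightarrow> (nat \<Rightarrow> nat) set" where
  "comps q n = {t. (\<forall>i\<ge>q. t i = 0) \<and> (\<Sum>i<q. t i) = n}"

definition dc :: "nat \<Rightarrow> (nat \<Rightarrow> nat) \<Rightarrow> (nat \<Rightarrow> nat) \<Rightarrow> real" where
  "dc q t t' = (1/2) * (\<Sum>i<q. \<bar>real (t i) - real (t' i)\<bar>)"

end

theory Submission
  imports Defs
begin

lemma floor_eq_close:
  fixes x y w :: real
  assumes "w > 0" "floor (x / w) = floor (y / w)"
  shows "\<bar>x - y\<bar> < w"
proof -
  have "\<bar>x / w - y / w\<bar> < 1"
    using assms(2) floor_correct[of "x/w"] floor_correct[of "y/w"] by linarith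
  then have "\<bar>(x - y) / w\<bar> < 1" by (simp add: diff_divide_distrib)
  then show ?thesis using assms(1) by (simp add: abs_divide)
qed

lemma half_le: "(a::real) \<le> c \<Longrightarrow> b \<le> c \<Longrightarrow> (1/2) * (a + b) \<le> c" by (simp add: field_simps)

theorem lemma17:
  fixes q n :: nat and A :: "(nat \<Rightarrow> nat) set"
  assumes "q \<ge> 2" and "n \<ge> 3"
    and "A \<subseteq> comps q n"
    and "real (card A) \<ge> 3 ^ (q - 1)"
  shows "Min {dc q t t' | t t'. t \<in> A \<and> t' \<in> A \<and> t \<noteq> t'}
           \<le> 2 * (real q - 1) * real n / (real (card A) powr (1 / (real q - 1)))"
proof -
  define k where "k = q - 1"
  have qk: "q = Suc k" and k1: "k \<ge> 1" using assms(1) unfolding k_def by auto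
  have rqk: "real q - 1 = real k" using qk by simp
  define m where "m = real (card A)"
  have m3: "m \<ge> 3 ^ k" using assms(4) unfolding m_def k_def by simp
  have "(3::real) ^ k \<ge> 3" using k1
    using power_increasing[of 1 k "3::real"] by simp
  then have "m \<ge> 3" using m3 by linarith
  then have "card A \<noteq> 0" unfolding m_def by auto
  then have finA: "finite A" using card_ge_0_finite by auto
  have mpos: "m > 0" using \<open>m \<ge> 3\<close> by simp
  define r where "r = m powr (1 / real k)"
  have rk: "r ^ k = m"
  proof -
    have "r ^ k = r powr real k" unfolding r_def using mpos by (simp add: powr_realpow)
    also have "\<dots> = m" unfolding r_def using k1 mpos by (simp add: powr_powr)
    finally show ?thesis .
  qed
  have r3: "r \<ge> 3"
  proof -
    have "((3::real) ^ k) powr (1 / real k) = 3"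
      using k1 by (simp add: powr_realpow[symmetric] powr_powr)
    moreover have "((3::real) ^ k) powr (1 / real k) \<le> r"
      unfolding r_def using m3 by (intro powr_mono2) auto
    ultimately show ?thesis by simp
  qed
  define w where "w = 2 * real n / r"
  have wpos: "w > 0" using assms(2) r3 unfolding w_def by simp
  define N where "N = nat (floor (real n / w))"
  have nw: "real n / w = r / 2" unfolding w_def using assms(2) r3 by (simp add: field_simps)
  have "real N \<le> r / 2" unfolding N_def nw using r3 by linarith
  then have "real (N + 1) < r" using r3 by simp
  then have "real (N + 1) ^ k < r ^ k" using k1 by (intro power_strict_mono) auto
  then have cardlt: "real ((N + 1) ^ k) < m" using rk by simp
  define B where "B = PiE {..<k} (\<lambda>_. {..N})"
  have cardB: "card B = (N + 1) ^ k" unfolding B_def by (simp add: card_PiE)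
  define f where "f = (\<lambda>t::nat\<Rightarrow>nat. restrict (\<lambda>i. nat (floor (real (t i) / w))) {..<k})"
  have tle: "t i \<le> n" if "t \<in> A" "i < q" for t i
  proof -
    have "(\<Sum>i<q. t i) = n" using that assms(3) unfolding comps_def by auto
    moreover have "t i \<le> (\<Sum>i<q. t i)" using that by (intro member_le_sum) auto
    ultimately show ?thesis by simp
  qed
  have fB: "f ` A \<subseteq> B"
  proof
    fix y assume "y \<in> f ` A"
    then obtain t where t: "t \<in> A" "y = f t" by auto
    have "nat (floor (real (t i) / w)) \<le> N" if "i < k" for i
    proof -
      have "real (t i) / w \<le> real n / w" using tle[OF t(1), of i] that qk wpos
        by (simp add: divide_right_mono)
      then show ?thesis unfolding N_def by (intro nat_mono floor_mono)
    qed
    then show "y \<in> B" unfolding B_def t(2) f_def by auto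
  qed
  have "\<not> inj_on f A"
  proof
    assume "inj_on f A"
    then have "card A \<le> card B" using fB card_inj_on_le B_def by (metis finite_PiE finite_atMost finite_lessThan)
    then show False using cardlt cardB unfolding m_def by linarith
  qed
  then obtain t t' where tt: "t \<in> A" "t' \<in> A" "t \<noteq> t'" "f t = f t'"
    unfolding inj_on_def by auto
  have close: "\<bar>real (t i) - real (t' i)\<bar> < w" if "i < k" for i
  proof -
    have "f t i = f t' i" using tt(4) by simp
    then have "nat (floor (real (t i) / w)) = nat (floor (real (t' i) / w))"
      using that unfolding f_def by simp
    then have "floor (real (t i) / w) = floor (real (t' i) / w)"
      using wpos by (simp add: nat_eq_iff2)
    then show ?thesis using floor_eq_close wpos by blast
  qed
  have S1: "(\<Sum>i<k. \<bar>real (t i) - real (t' i)\<bar>) \<le> real k * w"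
    using sum_bounded_above[of "{..<k}" "\<lambda>i. \<bar>real (t i) - real (t' i)\<bar>" w] close
    by (simp add: less_imp_le)
  have sumt: "(\<Sum>i<k. real (t i)) + real (t k) = real n" "(\<Sum>i<k. real (t' i)) + real (t' k) = real n"
    using tt(1,2) assms(3) unfolding comps_def qk
    by (auto simp flip: of_nat_sum of_nat_add)
  have "\<bar>real (t k) - real (t' k)\<bar> = \<bar>(\<Sum>i<k. real (t' i) - real (t i))\<bar>"
    using sumt by (simp add: sum_subtractf)
  also have "\<dots> \<le> (\<Sum>i<k. \<bar>real (t' i) - real (t i)\<bar>)" by (rule sum_abs)
  also have "\<dots> = (\<Sum>i<k. \<bar>real (t i) - real (t' i)\<bar>)" by (simp add: abs_minus_commute)
  finally have S2: "\<bar>real (t k) - real (t' k)\<bar> \<le> real k * w" using S1 by linarith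
  have "dc q t t' = (1/2) * ((\<Sum>i<k. \<bar>real (t i) - real (t' i)\<bar>) + \<bar>real (t k) - real (t' k)\<bar>)"
    unfolding dc_def qk by simp
  also have "\<dots> \<le> real k * w" using S1 S2 half_le[where a="\<Sum>i<k. \<bar>real (t i) - real (t' i)\<bar>" and b="\<bar>real (t k) - real (t' k)\<bar>" and c="real k * w"] by blast
  also have "\<dots> = 2 * real k * real n / r"
    unfolding w_def by (simp only: times_divide_eq_right ac_simps)
  also have "\<dots> = 2 * (real q - 1) * real n / (real (card A) powr (1 / (real q - 1)))"
    unfolding rqk r_def m_def by (rule refl)
  finally have dle: "dc q t t' \<le> \<dots>" .
  have fin: "finite {dc q t t' | t t'. t \<in> A \<and> t' \<in> A \<and> t \<noteq> t'}"
  proof -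
    have "{dc q t t' | t t'. t \<in> A \<and> t' \<in> A \<and> t \<noteq> t'} \<subseteq> (\<lambda>(a,b). dc q a b) ` (A \<times> A)"
      by auto
    moreover have "finite ((\<lambda>(a,b). dc q a b) ` (A \<times> A))" using finA by simp
    ultimately show ?thesis by (rule finite_subset)
  qed
  have "dc q t t' \<in> {dc q t t' | t t'. t \<in> A \<and> t' \<in> A \<and> t \<noteq> t'}" using tt by blast
  then have "Min {dc q t t' | t t'. t \<in> A \<and> t' \<in> A \<and> t \<noteq> t'} \<le> dc q t t'"
    using fin by (rule Min_le[rotated])
  then show ?thesis using dle by linarith
qed

end
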